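(* Consider a finite discounted MDP as described in the context, with discount factor $\alpha\in(0,1)$, terminal reward vector $v^0\in\mathbb{R}^m$, and accuracy $\epsilon>0$. Let $v^1(x):=\max_{a\in A(x)}r(x,a)$ for $x\in\mathbb{X}$, assume the coefficient $\gamma$ of the MDP satisfies $\gamma\in(0,1]$, and assume $sp(v^1)+sp(v^0)>0$. Then the value iteration algorithm (described in the context) finds a deterministic $\epsilon$-optimal policy after a finite number of iterations bounded above by $$F(\alpha):=\max\left\{\left\lceil\frac{\log\frac{(1-\alpha)\epsilon\gamma}{sp(v^1)+(1+\alpha)sp(v^0)}}{\log(\alpha\gamma)}\right\rceil,1\right\}.$$ Furthermore, for any fixed $\epsilon>0$, any fixed $\gamma\in(0,1]$ and any fixed $v^0,v^1\in\mathbb{R}^m$ with $sp(v^1)+sp(v^0)>0$, the function $F$ defined by this formula on $\alpha\in(0,1)$ satisfies: (a) $\lim_{\alpha\downarrow0}F(\alpha)=1$ and $\lim_{\alpha\uparrow1}F(\alpha)=+\infty$; (b) $F(\alpha)$ is non-decreasing in $\alpha$.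
   Context: A finite MDP has state space $\mathbb{X}=\{1,\dots,m\}$, nonempty finite action sets $A(x)$ for $x\in\mathbb{X}$, with $k=\sum_{x}|A(x)|$; one-step rewards $r(x,a)\in\mathbb{R}$ and transition probabilities $p(y|x,a)$ with $\sum_y p(y|x,a)=1$; and a terminal reward vector $v^0\in\mathbb{R}^m$. For a policy $\pi$ (possibly randomized and history-dependent) and initial state $x$, $v^\pi_\alpha(x)=\mathbb{E}^\pi_x\sum_{t=0}^\infty \alpha^t r(x_t,a_t)$ and $v_\alpha(x)=\sup_\pi v^\pi_\alpha(x)$. A policy $\pi$ is $\epsilon$-optimal if $v^\pi_\alpha(x)\ge v_\alpha(x)-\epsilon$ for all $x$. A deterministic policy is a map $\phi$ with $\phi(x)\in A(x)$. For $v\in\mathbb{R}^m$, $T^a_\alpha v(x)=r(x,a)+\alpha\sum_{y}p(y|x,a)v(y)$, $T^\phi_\alpha v(x)=T^{\phi(x)}_\alpha v(x)$, $T_\alpha v(x)=\max_{a\in A(x)}T^a_\alpha v(x)$. The span seminorm is $sp(u)=\max_x u(x)-\min_x u(x)$. The coefficient $\gamma$ of the MDP is $\gamma:=\max_{x,y\in\mathbb{X},\,a\in A(x),\,b\in A(y)}\big[1-\sum_{z}\min\{p(z|x,a),p(z|y,b)\}\big]$. Value iteration algorithm (given $\alpha\in(0,1)$, $\epsilon>0$): (1) set $u:=v^0$ and a number $\Delta>\frac{1-\alpha}{\alpha}\epsilon$; (2) while $\Delta>\frac{1-\alpha}{\alpha}\epsilon$: compute $v:=T_\alpha u$, set $\Delta:=sp(u-v)$,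 $u^*:=u$, $u:=v$ (each pass is one iteration); (3) output a deterministic policy $\phi$ with $v=T^\phi_\alpha u^*$. *)

theory Defs
  imports Complex_Main
begin

text \<open>Finite MDP: states are the elements of a finite type 's (so m = CARD('s));
  A x is the action set of state x; r x a the one-step reward;
  p x a y the transition probability from x to y under action a.\<close>

definition sp :: "('s::finite \<Rightarrow> real) \<Rightarrow> real" where
  "sp u = (MAX x. u x) - (MIN x. u x)"

definition Tact :: "('s \<Rightarrow> 'a \<Rightarrow> real) \<Rightarrow> ('s \<Rightarrow> 'a \<Rightarrow> 's::finite \<Rightarrow> real)
    \<Rightarrow> real \<Rightarrow> 'a \<Rightarrow> ('s \<Rightarrow> real) \<Rightarrow> 's \<Rightarrow> real" where
  "Tact r p \<alpha> a v x = r x a + \<alpha> * (\<Sum>y\<in>UNIV. p x a y * v y)"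

definition Tpol :: "('s \<Rightarrow> 'a \<Rightarrow> real) \<Rightarrow> ('s \<Rightarrow> 'a \<Rightarrow> 's::finite \<Rightarrow> real)
    \<Rightarrow> real \<Rightarrow> ('s \<Rightarrow> 'a) \<Rightarrow> ('s \<Rightarrow> real) \<Rightarrow> 's \<Rightarrow> real" where
  "Tpol r p \<alpha> \<phi> v x = Tact r p \<alpha> (\<phi> x) v x"

definition Topt :: "('s \<Rightarrow> 'a set) \<Rightarrow> ('s \<Rightarrow> 'a \<Rightarrow> real) \<Rightarrow> ('s \<Rightarrow> 'a \<Rightarrow> 's::finite \<Rightarrow> real)
    \<Rightarrow> real \<Rightarrow> ('s \<Rightarrow> real) \<Rightarrow> 's \<Rightarrow> real" where
  "Topt A r p \<alpha> v x = Max ((\<lambda>a. Tact r p \<alpha> a v x) ` A x)"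

definition coeff :: "('s \<Rightarrow> 'a set) \<Rightarrow> ('s \<Rightarrow> 'a \<Rightarrow> 's::finite \<Rightarrow> real) \<Rightarrow> real" where
  "coeff A p = Max {1 - (\<Sum>z\<in>UNIV. min (p x a z) (p y b z)) | x y a b. a \<in> A x \<and> b \<in> A y}"

text \<open>General (randomized, history-dependent) policies: pi h x a is the probability of
  choosing action a in current state x after history h (list of past state-action pairs).\<close>
definition valid_policy :: "('s \<Rightarrow> 'a set) \<Rightarrow> (('s \<times> 'a) list \<Rightarrow> 's \<Rightarrow> 'a \<Rightarrow> real) \<Rightarrow> bool" where
  "valid_policy A \<pi> = (\<forall>h x. (\<forall>a\<in>A x. 0 \<le> \<pi> h x a) \<and> (\<Sum>a\<in>A x. \<pi> h x a) = 1)"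

text \<open>exp_rew A r p pi h x t: expected reward t steps ahead, given history h and current state x.
  Thus exp_rew A r p pi [] x t = E^pi_x r(x_t, a_t).\<close>
fun exp_rew :: "('s \<Rightarrow> 'a set) \<Rightarrow> ('s \<Rightarrow> 'a \<Rightarrow> real) \<Rightarrow> ('s \<Rightarrow> 'a \<Rightarrow> 's::finite \<Rightarrow> real)
    \<Rightarrow> (('s \<times> 'a) list \<Rightarrow> 's \<Rightarrow> 'a \<Rightarrow> real) \<Rightarrow> ('s \<times> 'a) list \<Rightarrow> 's \<Rightarrow> nat \<Rightarrow> real" where
  "exp_rew A r p \<pi> h x 0 = (\<Sum>a\<in>A x. \<pi> h x a * r x a)"
| "exp_rew A r p \<pi> h x (Suc t) =
     (\<Sum>a\<in>A x. \<pi> h x a * (\<Sum>y\<in>UNIV. p x a y * exp_rew A r p \<pi> (h @ [(x, a)]) y t))"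

definition pol_value :: "('s \<Rightarrow> 'a set) \<Rightarrow> ('s \<Rightarrow> 'a \<Rightarrow> real) \<Rightarrow> ('s \<Rightarrow> 'a \<Rightarrow> 's::finite \<Rightarrow> real)
    \<Rightarrow> real \<Rightarrow> (('s \<times> 'a) list \<Rightarrow> 's \<Rightarrow> 'a \<Rightarrow> real) \<Rightarrow> 's \<Rightarrow> real" where
  "pol_value A r p \<alpha> \<pi> x = (\<Sum>t. \<alpha> ^ t * exp_rew A r p \<pi> [] x t)"

definition opt_value :: "('s \<Rightarrow> 'a set) \<Rightarrow> ('s \<Rightarrow> 'a \<Rightarrow> real) \<Rightarrow> ('s \<Rightarrow> 'a \<Rightarrow> 's::finite \<Rightarrow> real)
    \<Rightarrow> real \<Rightarrow> 's \<Rightarrow> real" where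
  "opt_value A r p \<alpha> x = (SUP \<pi>\<in>{\<pi>. valid_policy A \<pi>}. pol_value A r p \<alpha> \<pi> x)"

definition eps_optimal :: "('s \<Rightarrow> 'a set) \<Rightarrow> ('s \<Rightarrow> 'a \<Rightarrow> real) \<Rightarrow> ('s \<Rightarrow> 'a \<Rightarrow> 's::finite \<Rightarrow> real)
    \<Rightarrow> real \<Rightarrow> real \<Rightarrow> (('s \<times> 'a) list \<Rightarrow> 's \<Rightarrow> 'a \<Rightarrow> real) \<Rightarrow> bool" where
  "eps_optimal A r p \<alpha> \<epsilon> \<pi> = (\<forall>x. pol_value A r p \<alpha> \<pi> x \<ge> opt_value A r p \<alpha> x - \<epsilon>)"

definition det_policy :: "('s \<Rightarrow> 'a) \<Rightarrow> ('s \<times> 'a) list \<Rightarrow> 's \<Rightarrow> 'a \<Rightarrow> real" where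
  "det_policy \<phi> h x a = (if a = \<phi> x then 1 else 0)"

text \<open>Iteration n (n >= 1) computes
  v = T u with u = T^(n-1) v0 and Delta = sp(u - v); the loop stops after the first
  iteration n with Delta <= (1-alpha)/alpha * eps.\<close>
definition VI_iter :: "('s \<Rightarrow> 'a set) \<Rightarrow> ('s \<Rightarrow> 'a \<Rightarrow> real) \<Rightarrow> ('s \<Rightarrow> 'a \<Rightarrow> 's::finite \<Rightarrow> real)
    \<Rightarrow> real \<Rightarrow> ('s \<Rightarrow> real) \<Rightarrow> nat \<Rightarrow> 's \<Rightarrow> real" where
  "VI_iter A r p \<alpha> v0 n = (Topt A r p \<alpha> ^^ n) v0"

definition VI_stop :: "('s \<Rightarrow> 'a set) \<Rightarrow> ('s \<Rightarrow> 'a \<Rightarrow> real) \<Rightarrow> ('s \<Rightarrow> 'a \<Rightarrow> 's::finite \<Rightarrow> real)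
    \<Rightarrow> real \<Rightarrow> real \<Rightarrow> ('s \<Rightarrow> real) \<Rightarrow> nat \<Rightarrow> bool" where
  "VI_stop A r p \<alpha> \<epsilon> v0 n = (1 \<le> n \<and>
     sp (\<lambda>x. VI_iter A r p \<alpha> v0 (n - 1) x - VI_iter A r p \<alpha> v0 n x) \<le> (1 - \<alpha>) / \<alpha> * \<epsilon>)"

text \<open>The bound F(alpha); s1 = sp(v1), s0 = sp(v0).\<close>
definition VI_bound :: "real \<Rightarrow> real \<Rightarrow> real \<Rightarrow> real \<Rightarrow> real \<Rightarrow> real" where
  "VI_bound \<epsilon> \<gamma> s1 s0 \<alpha> =
     max (real_of_int \<lceil>ln ((1 - \<alpha>) * \<epsilon> * \<gamma> / (s1 + (1 + \<alpha>) * s0)) / ln (\<alpha> * \<gamma>)\<rceil>) 1"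

end

theory Submission
  imports Defs
begin

lemma sp_ge: "f x - f y \<le> sp (f::'s::finite \<Rightarrow> real)"
  unfolding sp_def by (intro diff_mono Max_ge Min_le) auto

lemma Max_ge': "f x \<le> (MAX x. (f::'s::finite \<Rightarrow> real) x)" by (intro Max_ge) auto
lemma Min_le': "(MIN x. (f::'s::finite \<Rightarrow> real) x) \<le> f x" by (intro Min_le) auto

lemma sp_le: assumes "\<And>x y. f x - f y \<le> c" shows "sp (f::'s::finite \<Rightarrow> real) \<le> c"
proof -
  have "(MAX x. f x) \<in> range f" "(MIN x. f x) \<in> range f" by (intro Max_in Min_in; simp)+
  then obtain x y where "(MAX x. f x) = f x" "(MIN x. f x) = f y" by (metis imageE)
  then show ?thesis unfolding sp_def using assms[of x y] by simp
qed

lemma sp_nonneg: "0 \<le> sp (f::'s::finite \<Rightarrow> real)" using sp_ge[of f x x for x] by simp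

lemma prob_diff:
  fixes q1 q2 d :: "'s::finite \<Rightarrow> real"
  assumes "\<And>z. 0 \<le> q1 z" "\<And>z. 0 \<le> q2 z" "sum q1 UNIV = 1" "sum q2 UNIV = 1"
    and "\<And>z. lo \<le> d z" "\<And>z. d z \<le> hi"
  shows "(\<Sum>z\<in>UNIV. (q1 z - q2 z) * d z) \<le> (1 - (\<Sum>z\<in>UNIV. min (q1 z) (q2 z))) * (hi - lo)"
proof -
  let ?m = "\<lambda>z. min (q1 z) (q2 z)"
  have "(\<Sum>z\<in>UNIV. (q1 z - q2 z) * d z) = (\<Sum>z\<in>UNIV. (q1 z - ?m z) * d z) - (\<Sum>z\<in>UNIV. (q2 z - ?m z) * d z)"
    by (simp add: sum_subtractf[symmetric] algebra_simps)
  also have "\<dots> \<le> (\<Sum>z\<in>UNIV. (q1 z - ?m z) * hi) - (\<Sum>z\<in>UNIV. (q2 z - ?m z) * lo)"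
    using assms by (intro diff_mono sum_mono mult_left_mono) auto
  also have "\<dots> = (1 - (\<Sum>z\<in>UNIV. ?m z)) * hi - (1 - (\<Sum>z\<in>UNIV. ?m z)) * lo"
    using assms(3,4) by (simp only: sum_distrib_right[symmetric] sum_subtractf)
  also have "\<dots> = (1 - (\<Sum>z\<in>UNIV. ?m z)) * (hi - lo)" by (simp add: algebra_simps)
  finally show ?thesis .
qed

locale mdpc =
  fixes A :: "'s::finite \<Rightarrow> 'a set" and r :: "'s \<Rightarrow> 'a \<Rightarrow> real"
    and p :: "'s \<Rightarrow> 'a \<Rightarrow> 's \<Rightarrow> real" and \<alpha> :: real
  assumes A_fin: "\<And>x. finite (A x)" and A_ne: "\<And>x. A x \<noteq> {}"
    and p_nonneg: "\<And>x a y. a \<in> A x \<Longrightarrow> 0 \<le> p x a y"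
    and p_sum: "\<And>x a. a \<in> A x \<Longrightarrow> (\<Sum>y\<in>UNIV. p x a y) = 1"
    and al0: "0 < \<alpha>" and al1: "\<alpha> < 1"
begin

abbreviation "T \<equiv> Topt A r p \<alpha>"

lemma Tact_shift:
  assumes a: "a \<in> A x" and le: "\<And>y. w y \<le> w' y + c"
  shows "Tact r p \<alpha> a w x \<le> Tact r p \<alpha> a w' x + \<alpha> * c"
proof -
  have "(\<Sum>y\<in>UNIV. p x a y * w y) \<le> (\<Sum>y\<in>UNIV. p x a y * (w' y + c))"
    by (rule sum_mono) (simp add: mult_left_mono le p_nonneg[OF a])
  also have "\<dots> = (\<Sum>y\<in>UNIV. p x a y * w' y) + c"
    using p_sum[OF a] by (simp add: distrib_left sum.distrib sum_distrib_right[symmetric])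
  finally show ?thesis unfolding Tact_def using al0
    by (smt (verit, best) mult_left_mono distrib_left)
qed

lemma Topt_ge: "a \<in> A x \<Longrightarrow> Tact r p \<alpha> a w x \<le> T w x"
  unfolding Topt_def using A_fin by (intro Max_ge) auto

lemma Topt_att: "\<exists>a\<in>A x. T w x = Tact r p \<alpha> a w x"
proof -
  have "T w x \<in> (\<lambda>a. Tact r p \<alpha> a w x) ` A x"
    unfolding Topt_def using A_fin A_ne by (intro Max_in) auto
  then show ?thesis by auto
qed

lemma Topt_shift:
  assumes le: "\<And>y. w y \<le> w' y + c"
  shows "T w x \<le> T w' x + \<alpha> * c"
proof -
  obtain a where a: "a \<in> A x" "T w x = Tact r p \<alpha> a w x" using Topt_att by blast
  have "Tact r p \<alpha> a w x \<le> Tact r p \<alpha> a w' x + \<alpha> * c" by (rule Tact_shift[OF a(1) le])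
  also have "\<dots> \<le> T w' x + \<alpha> * c" using Topt_ge[OF a(1)] by simp
  finally show ?thesis using a by simp
qed

lemma Tpol_shift:
  assumes phi: "\<forall>x. \<phi> x \<in> A x" and le: "\<And>y. w y \<le> w' y + c"
  shows "Tpol r p \<alpha> \<phi> w x \<le> Tpol r p \<alpha> \<phi> w' x + \<alpha> * c"
  unfolding Tpol_def using phi le by (intro Tact_shift) auto

lemma geo_step: "(\<Sum>k<Suc n. \<alpha> ^ k) = 1 + \<alpha> * (\<Sum>k<n. \<alpha> ^ k)"
  unfolding sum.lessThan_Suc_shift by (simp add: sum_distrib_left)

lemma iter_contr:
  fixes S :: "('s \<Rightarrow> real) \<Rightarrow> 's \<Rightarrow> real"
  assumes sh: "\<And>w w' c x. (\<And>y. w y \<le> w' y + c) \<Longrightarrow> S w x \<le> S w' x + \<alpha> * c"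
    and le: "\<And>y. w y \<le> w' y + c"
  shows "(S ^^ n) w x \<le> (S ^^ n) w' x + \<alpha> ^ n * c"
  using le
proof (induction n arbitrary: x c)
  case 0 then show ?case by auto
next
  case (Suc n)
  have "S ((S ^^ n) w) x \<le> S ((S ^^ n) w') x + \<alpha> * (\<alpha> ^ n * c)"
    by (rule sh) (rule Suc.IH[OF Suc.prems])
  then show ?case by (simp add: mult.assoc)
qed

lemma iter_upper:
  fixes S :: "('s \<Rightarrow> real) \<Rightarrow> 's \<Rightarrow> real"
  assumes sh: "\<And>w w' c x. (\<And>y. w y \<le> w' y + c) \<Longrightarrow> S w x \<le> S w' x + \<alpha> * c"
    and le: "\<And>y. S v y \<le> v y + c"
  shows "(S ^^ n) v x \<le> v x + c * (\<Sum>k<n. \<alpha> ^ k)"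
proof (induction n arbitrary: x)
  case 0 then show ?case by simp
next
  case (Suc n)
  have "S ((S ^^ n) v) x \<le> S v x + \<alpha> * (c * (\<Sum>k<n. \<alpha> ^ k))"
    by (rule sh) (use Suc.IH in auto)
  also have "\<dots> \<le> v x + c + \<alpha> * (c * (\<Sum>k<n. \<alpha> ^ k))" using le[of x] by simp
  also have "\<dots> = v x + c * (\<Sum>k<Suc n. \<alpha> ^ k)"
    using geo_step[of n] by (simp add: algebra_simps)
  finally show ?case by simp
qed

lemma iter_lower:
  fixes S :: "('s \<Rightarrow> real) \<Rightarrow> 's \<Rightarrow> real"
  assumes sh: "\<And>w w' c x. (\<And>y. w y \<le> w' y + c) \<Longrightarrow> S w x \<le> S w' x + \<alpha> * c"
    and le: "\<And>y. v y + c \<le> S v y"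
  shows "v x + c * (\<Sum>k<n. \<alpha> ^ k) \<le> (S ^^ n) v x"
proof (induction n arbitrary: x)
  case 0 then show ?case by simp
next
  case (Suc n)
  have "S v x \<le> S ((S ^^ n) v) x + \<alpha> * (- (c * (\<Sum>k<n. \<alpha> ^ k)))"
    by (rule sh) (smt (verit) Suc.IH)
  moreover have "v x + c * (\<Sum>k<Suc n. \<alpha> ^ k) = v x + c + \<alpha> * (c * (\<Sum>k<n. \<alpha> ^ k))"
    using geo_step[of n] by (simp add: algebra_simps)
  ultimately show ?case using le[of x] by simp
qed

definition "PS \<pi> h x n = (\<Sum>t<n. \<alpha> ^ t * exp_rew A r p \<pi> h x t)"

lemma PS_Suc: "PS \<pi> h x (Suc n) = (\<Sum>a\<in>A x. \<pi> h x a * (r x a + \<alpha> *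
     (\<Sum>y\<in>UNIV. p x a y * PS \<pi> (h @ [(x, a)]) y n)))"
proof -
  have "PS \<pi> h x (Suc n) = exp_rew A r p \<pi> h x 0 + (\<Sum>t<n. \<alpha> ^ Suc t * exp_rew A r p \<pi> h x (Suc t))"
    unfolding PS_def sum.lessThan_Suc_shift by simp
  also have "(\<Sum>t<n. \<alpha> ^ Suc t * exp_rew A r p \<pi> h x (Suc t)) =
      (\<Sum>a\<in>A x. \<pi> h x a * (\<alpha> * (\<Sum>y\<in>UNIV. p x a y * PS \<pi> (h @ [(x, a)]) y n)))"
    unfolding PS_def exp_rew.simps
    by (simp add: sum_distrib_left sum_distrib_right mult_ac sum.swap[of _ "{..<n}"])
  finally show ?thesis by (simp add: distrib_left sum.distrib sum_distrib_left mult_ac)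
qed

lemma PS_le:
  assumes v: "valid_policy A \<pi>"
  shows "PS \<pi> h x n \<le> (T ^^ n) (\<lambda>_. 0) x"
proof (induction n arbitrary: h x)
  case 0 then show ?case by (simp add: PS_def)
next
  case (Suc n)
  have "PS \<pi> h x (Suc n) \<le> (\<Sum>a\<in>A x. \<pi> h x a * T ((T ^^ n) (\<lambda>_. 0)) x)"
    unfolding PS_Suc
  proof (rule sum_mono)
    fix a assume a: "a \<in> A x"
    have "(\<Sum>y\<in>UNIV. p x a y * PS \<pi> (h @ [(x, a)]) y n) \<le> (\<Sum>y\<in>UNIV. p x a y * (T ^^ n) (\<lambda>_. 0) y)"
      by (rule sum_mono) (simp add: mult_left_mono p_nonneg[OF a] Suc.IH)
    then have "r x a + \<alpha> * (\<Sum>y\<in>UNIV. p x a y * PS \<pi> (h @ [(x, a)]) y n) \<le> Tact r p \<alpha> a ((T ^^ n) (\<lambda>_. 0)) x"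
      unfolding Tact_def using al0 by (simp add: mult_left_mono)
    also have "\<dots> \<le> T ((T ^^ n) (\<lambda>_. 0)) x" by (rule Topt_ge[OF a])
    finally show "\<pi> h x a * (r x a + \<alpha> * (\<Sum>y\<in>UNIV. p x a y * PS \<pi> (h @ [(x, a)]) y n))
        \<le> \<pi> h x a * T ((T ^^ n) (\<lambda>_. 0)) x"
      using v a unfolding valid_policy_def by (simp add: mult_left_mono)
  qed
  also have "\<dots> = T ((T ^^ n) (\<lambda>_. 0)) x"
    using v unfolding valid_policy_def by (simp add: sum_distrib_right[symmetric])
  finally show ?case by simp
qed

lemma PS_det:
  assumes phi: "\<forall>x. \<phi> x \<in> A x"
  shows "PS (det_policy \<phi>) h x n = (Tpol r p \<alpha> \<phi> ^^ n) (\<lambda>_. 0) x"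
proof (induction n arbitrary: h x)
  case 0 then show ?case by (simp add: PS_def)
next
  case (Suc n)
  have "PS (det_policy \<phi>) h x (Suc n) = r x (\<phi> x) + \<alpha> * (\<Sum>y\<in>UNIV. p x (\<phi> x) y * PS (det_policy \<phi>) (h @ [(x, \<phi> x)]) y n)"
    unfolding PS_Suc det_policy_def using phi A_fin[of x]
    by (simp add: if_distrib[of "\<lambda>c. c * _"] sum.delta' cong: if_cong)
  then show ?case using Suc.IH by (simp add: Tpol_def Tact_def)
qed

definition "Rb = (\<Sum>x\<in>UNIV. \<Sum>a\<in>A x. \<bar>r x a\<bar>)"

lemma r_le: "a \<in> A x \<Longrightarrow> \<bar>r x a\<bar> \<le> Rb"
proof -
  assume a: "a \<in> A x"
  have "\<bar>r x a\<bar> \<le> (\<Sum>a\<in>A x. \<bar>r x a\<bar>)" using A_fin a by (intro member_le_sum) auto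
  also have "\<dots> \<le> Rb" unfolding Rb_def
    by (rule member_le_sum[where f="\<lambda>x. \<Sum>a\<in>A x. \<bar>r x a\<bar>"]) (auto intro: sum_nonneg)
  finally show ?thesis .
qed

lemma exp_rew_bound:
  assumes v: "valid_policy A \<pi>"
  shows "\<bar>exp_rew A r p \<pi> h x t\<bar> \<le> Rb"
proof (induction t arbitrary: h x)
  case 0
  have "\<bar>exp_rew A r p \<pi> h x 0\<bar> \<le> (\<Sum>a\<in>A x. \<pi> h x a * Rb)"
    unfolding exp_rew.simps
    apply (rule order_trans[OF sum_abs], rule sum_mono)
    using v r_le unfolding valid_policy_def by (simp add: abs_mult mult_left_mono)
  also have "\<dots> = Rb" using v unfolding valid_policy_def by (simp add: sum_distrib_right[symmetric])
  finally show ?case .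
next
  case (Suc t)
  have "\<bar>exp_rew A r p \<pi> h x (Suc t)\<bar> \<le> (\<Sum>a\<in>A x. \<pi> h x a * Rb)"
    unfolding exp_rew.simps
  proof (rule order_trans[OF sum_abs], rule sum_mono)
    fix a assume a: "a \<in> A x"
    have "\<bar>\<Sum>y\<in>UNIV. p x a y * exp_rew A r p \<pi> (h @ [(x, a)]) y t\<bar> \<le> (\<Sum>y\<in>UNIV. p x a y * Rb)"
      apply (rule order_trans[OF sum_abs], rule sum_mono)
      using p_nonneg[OF a] Suc.IH by (simp add: abs_mult mult_left_mono)
    also have "\<dots> = Rb" using p_sum[OF a] by (simp add: sum_distrib_right[symmetric])
    finally show "\<bar>\<pi> h x a * (\<Sum>y\<in>UNIV. p x a y * exp_rew A r p \<pi> (h @ [(x, a)]) y t)\<bar> \<le> \<pi> h x a * Rb"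
      using v a unfolding valid_policy_def by (simp add: abs_mult mult_left_mono)
  qed
  also have "\<dots> = Rb" using v unfolding valid_policy_def by (simp add: sum_distrib_right[symmetric])
  finally show ?case .
qed

lemma PS_lim:
  assumes v: "valid_policy A \<pi>"
  shows "(\<lambda>n. PS \<pi> [] x n) \<longlonglongrightarrow> pol_value A r p \<alpha> \<pi> x"
proof -
  have "summable (\<lambda>t. Rb * \<alpha> ^ t)" using al0 al1 by (intro summable_mult summable_geometric) simp
  then have "summable (\<lambda>t. \<alpha> ^ t * exp_rew A r p \<pi> [] x t)"
    apply (rule summable_comparison_test[rotated])
    using exp_rew_bound[OF v] al0 by (auto simp: abs_mult mult.commute mult_left_mono)
  then show ?thesis unfolding PS_def pol_value_def by (rule summable_LIMSEQ)
qed

lemma geo_lim: "(\<lambda>n. \<Sum>k<n. \<alpha> ^ k) \<longlonglongrightarrow> 1 / (1 - \<alpha>)"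
  using geometric_sums[of \<alpha>] al0 al1 unfolding sums_def by simp

lemma pow_lim: "(\<lambda>n. \<alpha> ^ n) \<longlonglongrightarrow> 0"
  using al0 al1 by (intro LIMSEQ_power_zero) simp

lemma det_valid: "\<forall>x. \<phi> x \<in> A x \<Longrightarrow> valid_policy A (det_policy \<phi>)"
  unfolding valid_policy_def det_policy_def using A_fin by (simp add: sum.delta')

lemma greedy_opt:
  assumes phi: "\<forall>x. \<phi> x \<in> A x" and vT: "v = T u" and vP: "Tpol r p \<alpha> \<phi> u = v"
    and stop: "sp (\<lambda>x. u x - v x) \<le> (1 - \<alpha>) / \<alpha> * \<epsilon>"
  shows "eps_optimal A r p \<alpha> \<epsilon> (det_policy \<phi>)"
proof -
  define d where "d = (\<lambda>x. u x - v x)"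
  define M where "M = (MAX x. d x)"
  define m where "m = (MIN x. d x)"
  define C where "C = (\<Sum>y\<in>UNIV. \<bar>v y\<bar>)"
  have vC: "\<bar>v y\<bar> \<le> C" for y unfolding C_def by (rule member_le_sum) auto
  have vC1: "(\<lambda>_. 0) y \<le> v y + C" for y using vC[of y] by simp
  have vC2: "v y \<le> (\<lambda>_. 0) y + C" for y using vC[of y] by simp
  have mle: "v y \<le> u y + - m" for y
  proof -
    have "m \<le> d y" using Min_le'[of d y] by (simp only: m_def)
    then show ?thesis by (simp add: d_def)
  qed
  have Mge: "u y \<le> v y + M" for y
  proof -
    have "d y \<le> M" using Max_ge'[of d y] by (simp only: M_def)
    then show ?thesis by (simp add: d_def)
  qed
  have spd: "M - m = sp d" unfolding M_def m_def sp_def ..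
  have shT: "\<And>w w' c x. (\<And>y. w y \<le> w' y + c) \<Longrightarrow> T w x \<le> T w' x + \<alpha> * c"
    by (rule Topt_shift)
  have shP: "\<And>w w' c x. (\<And>y. w y \<le> w' y + c) \<Longrightarrow> Tpol r p \<alpha> \<phi> w x \<le> Tpol r p \<alpha> \<phi> w' x + \<alpha> * c"
    by (rule Tpol_shift[OF phi])
  have up: "(T ^^ n) (\<lambda>_. 0) x \<le> v x + (- \<alpha> * m) * (\<Sum>k<n. \<alpha> ^ k) + \<alpha> ^ n * C" for n x
  proof -
    have "(T ^^ n) (\<lambda>_. 0) x \<le> (T ^^ n) v x + \<alpha> ^ n * C"
      by (rule iter_contr[where S=T and w="\<lambda>_. 0" and w'=v, OF shT vC1])
    moreover have "(T ^^ n) v x \<le> v x + (- \<alpha> * m) * (\<Sum>k<n. \<alpha> ^ k)"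
    proof (rule iter_upper[OF shT])
      fix y
      have "T v y \<le> T u y + \<alpha> * (- m)"
        by (rule Topt_shift) (rule mle)
      then show "T v y \<le> v y + - \<alpha> * m" using vT by simp
    qed
    ultimately show ?thesis by simp
  qed
  have lo: "v x + (- \<alpha> * M) * (\<Sum>k<n. \<alpha> ^ k) - \<alpha> ^ n * C \<le> (Tpol r p \<alpha> \<phi> ^^ n) (\<lambda>_. 0) x" for n x
  proof -
    have "(Tpol r p \<alpha> \<phi> ^^ n) v x \<le> (Tpol r p \<alpha> \<phi> ^^ n) (\<lambda>_. 0) x + \<alpha> ^ n * C"
      by (rule iter_contr[where S="Tpol r p \<alpha> \<phi>" and w=v and w'="\<lambda>_. 0", OF shP vC2])
    moreover have "v x + (- \<alpha> * M) * (\<Sum>k<n. \<alpha> ^ k) \<le> (Tpol r p \<alpha> \<phi> ^^ n) v x"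
    proof (rule iter_lower[OF shP])
      fix y
      have "Tpol r p \<alpha> \<phi> u y \<le> Tpol r p \<alpha> \<phi> v y + \<alpha> * M"
        by (rule Tpol_shift[OF phi]) (rule Mge)
      then show "v y + - \<alpha> * M \<le> Tpol r p \<alpha> \<phi> v y" using vP by simp
    qed
    ultimately show ?thesis by simp
  qed
  have lim1: "(\<lambda>n. v x + (- \<alpha> * m) * (\<Sum>k<n. \<alpha> ^ k) + \<alpha> ^ n * C) \<longlonglongrightarrow> v x + (- \<alpha> * m) * (1 / (1 - \<alpha>)) + 0 * C" for x
    by (intro tendsto_intros geo_lim pow_lim)
  have lim2: "(\<lambda>n. v x + (- \<alpha> * M) * (\<Sum>k<n. \<alpha> ^ k) - \<alpha> ^ n * C) \<longlonglongrightarrow> v x + (- \<alpha> * M) * (1 / (1 - \<alpha>)) - 0 * C" for x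
    by (intro tendsto_intros geo_lim pow_lim)
  have polU: "pol_value A r p \<alpha> \<pi> x \<le> v x - \<alpha> * m / (1 - \<alpha>)" if "valid_policy A \<pi>" for \<pi> x
  proof -
    have "pol_value A r p \<alpha> \<pi> x \<le> v x + (- \<alpha> * m) * (1 / (1 - \<alpha>)) + 0 * C"
      by (rule LIMSEQ_le[OF PS_lim[OF that] lim1]) (use PS_le[OF that] up order_trans in blast)
    then show ?thesis by simp
  qed
  have polL: "v x - \<alpha> * M / (1 - \<alpha>) \<le> pol_value A r p \<alpha> (det_policy \<phi>) x" for x
  proof -
    have "v x + (- \<alpha> * M) * (1 / (1 - \<alpha>)) - 0 * C \<le> pol_value A r p \<alpha> (det_policy \<phi>) x"
      by (rule LIMSEQ_le[OF lim2 PS_lim[OF det_valid[OF phi]]]) (use PS_det[OF phi] lo in simp)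
    then show ?thesis by simp
  qed
  have opt: "opt_value A r p \<alpha> x \<le> v x - \<alpha> * m / (1 - \<alpha>)" for x
    unfolding opt_value_def
    by (rule cSUP_least) (use det_valid[OF phi] polU in auto)
  have key: "\<alpha> * (M - m) / (1 - \<alpha>) \<le> \<epsilon>"
  proof -
    have "\<alpha> * (M - m) \<le> \<alpha> * ((1 - \<alpha>) / \<alpha> * \<epsilon>)"
      using mult_left_mono[OF stop, of \<alpha>] spd al0 unfolding d_def by simp
    also have "\<dots> = (1 - \<alpha>) * \<epsilon>" using al0 by simp
    finally show ?thesis using al1 by (simp add: divide_le_eq mult.commute)
  qed
  show ?thesis unfolding eps_optimal_def
  proof
    fix x
    have "opt_value A r p \<alpha> x - \<epsilon> \<le> v x - \<alpha> * m / (1 - \<alpha>) - \<alpha> * (M - m) / (1 - \<alpha>)"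
      using opt[of x] key by linarith
    also have "\<dots> = v x - \<alpha> * M / (1 - \<alpha>)" by (simp add: diff_divide_distrib right_diff_distrib)
    also have "\<dots> \<le> pol_value A r p \<alpha> (det_policy \<phi>) x" by (rule polL)
    finally show "opt_value A r p \<alpha> x - \<epsilon> \<le> pol_value A r p \<alpha> (det_policy \<phi>) x" .
  qed
qed

lemma coeff_ge: "a \<in> A x \<Longrightarrow> b \<in> A y \<Longrightarrow> 1 - (\<Sum>z\<in>UNIV. min (p x a z) (p y b z)) \<le> coeff A p"
  unfolding coeff_def
proof (rule Max_ge)
  let ?f = "\<lambda>((x, a), (y, b)). 1 - (\<Sum>z\<in>UNIV. min (p x a z) (p y b z))"
  have "{1 - (\<Sum>z\<in>UNIV. min (p x a z) (p y b z)) |x y a b. a \<in> A x \<and> b \<in> A y}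
     \<subseteq> ?f ` (Sigma UNIV A \<times> Sigma UNIV A)" by force
  moreover have "finite (Sigma UNIV A \<times> Sigma UNIV A)" using A_fin by auto
  ultimately show "finite {1 - (\<Sum>z\<in>UNIV. min (p x a z) (p y b z)) |x y a b. a \<in> A x \<and> b \<in> A y}"
    by (meson finite_surj)
qed (auto)

lemma T_contr:
  assumes g0: "0 \<le> coeff A p"
  shows "sp (\<lambda>x. T u x - T w x) \<le> \<alpha> * coeff A p * sp (\<lambda>x. u x - w x)"
proof (rule sp_le)
  fix x y
  let ?d = "\<lambda>z. u z - w z"
  obtain a where a: "a \<in> A x" "T u x = Tact r p \<alpha> a u x" using Topt_att by blast
  obtain b where b: "b \<in> A y" "T w y = Tact r p \<alpha> b w y" using Topt_att by blast
  have 1: "T w x \<ge> Tact r p \<alpha> a w x" by (rule Topt_ge[OF a(1)])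
  have 2: "T u y \<ge> Tact r p \<alpha> b u y" by (rule Topt_ge[OF b(1)])
  have "(T u x - T w x) - (T u y - T w y) \<le> (Tact r p \<alpha> a u x - Tact r p \<alpha> a w x) - (Tact r p \<alpha> b u y - Tact r p \<alpha> b w y)"
    using a b 1 2 by linarith
  also have "\<dots> = \<alpha> * (\<Sum>z\<in>UNIV. (p x a z - p y b z) * ?d z)"
  proof -
    have eq: "(\<Sum>z\<in>UNIV. (p x a z - p y b z) * ?d z) = ((\<Sum>z\<in>UNIV. p x a z * u z) - (\<Sum>z\<in>UNIV. p x a z * w z))
       - ((\<Sum>z\<in>UNIV. p y b z * u z) - (\<Sum>z\<in>UNIV. p y b z * w z))"
      by (simp add: sum_subtractf[symmetric] algebra_simps)
    show ?thesis unfolding Tact_def by (subst eq) (simp add: right_diff_distrib)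
  qed
  also have "\<dots> \<le> \<alpha> * ((1 - (\<Sum>z\<in>UNIV. min (p x a z) (p y b z))) * ((MAX z. ?d z) - (MIN z. ?d z)))"
    using al0 p_nonneg a(1) b(1) p_sum
    by (intro mult_left_mono prob_diff Max_ge' Min_le') auto
  also have "\<dots> \<le> \<alpha> * (coeff A p * sp ?d)"
    unfolding sp_def[symmetric] using al0 sp_nonneg coeff_ge[OF a(1) b(1)]
    by (intro mult_left_mono mult_right_mono) auto
  finally show "(T u x - T w x) - (T u y - T w y) \<le> \<alpha> * coeff A p * sp ?d" by simp
qed

lemma Delta_bound:
  assumes g0: "0 \<le> coeff A p"
  shows "sp (\<lambda>x. (T ^^ n) v0 x - (T ^^ Suc n) v0 x) \<le> (\<alpha> * coeff A p) ^ n * sp (\<lambda>x. v0 x - T v0 x)"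
proof (induction n)
  case 0 then show ?case by simp
next
  case (Suc n)
  have "sp (\<lambda>x. (T ^^ Suc n) v0 x - (T ^^ Suc (Suc n)) v0 x)
      = sp (\<lambda>x. T ((T ^^ n) v0) x - T ((T ^^ Suc n) v0) x)" by simp
  also have "\<dots> \<le> \<alpha> * coeff A p * sp (\<lambda>x. (T ^^ n) v0 x - (T ^^ Suc n) v0 x)"
    by (rule T_contr[OF g0])
  also have "\<dots> \<le> \<alpha> * coeff A p * ((\<alpha> * coeff A p) ^ n * sp (\<lambda>x. v0 x - T v0 x))"
    using Suc.IH al0 g0 by (intro mult_left_mono) auto
  finally show ?case by (simp add: mult_ac)
qed

lemma Delta0:
  assumes v1: "\<And>x. v1 x = Max ((\<lambda>a. r x a) ` A x)"
  shows "sp (\<lambda>x. v0 x - T v0 x) \<le> sp v1 + (1 + \<alpha>) * sp v0"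
proof (rule sp_le)
  fix x y
  have up: "T v0 y \<le> v1 y + \<alpha> * (MAX z. v0 z)"
  proof -
    obtain b where b: "b \<in> A y" "T v0 y = Tact r p \<alpha> b v0 y" using Topt_att by blast
    have "r y b \<le> v1 y" unfolding v1 using A_fin b by (intro Max_ge) auto
    moreover have "(\<Sum>z\<in>UNIV. p y b z * v0 z) \<le> (\<Sum>z\<in>UNIV. p y b z * (MAX z. v0 z))"
      using p_nonneg[OF b(1)] by (intro sum_mono mult_left_mono Max_ge') auto
    ultimately show ?thesis using b p_sum[OF b(1)] al0 unfolding Tact_def
      by (simp add: sum_distrib_right[symmetric] mult_left_mono add_mono)
  qed
  have lo: "v1 x + \<alpha> * (MIN z. v0 z) \<le> T v0 x"
  proof -
    have "v1 x \<in> (\<lambda>a. r x a) ` A x" unfolding v1 using A_fin A_ne by (intro Max_in) auto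
    then obtain a where a: "a \<in> A x" "v1 x = r x a" by auto
    have "(\<Sum>z\<in>UNIV. p x a z * (MIN z. v0 z)) \<le> (\<Sum>z\<in>UNIV. p x a z * v0 z)"
      using p_nonneg[OF a(1)] by (intro sum_mono mult_left_mono Min_le') auto
    then have "v1 x + \<alpha> * (MIN z. v0 z) \<le> Tact r p \<alpha> a v0 x"
      using a p_sum[OF a(1)] al0 unfolding Tact_def
      by (simp add: sum_distrib_right[symmetric] mult_left_mono)
    then show ?thesis using Topt_ge[OF a(1), of v0] by linarith
  qed
  have "v1 y - v1 x \<le> sp v1" by (rule sp_ge)
  moreover have "v0 x - v0 y \<le> sp v0" by (rule sp_ge)
  moreover have "\<alpha> * ((MAX z. v0 z) - (MIN z. v0 z)) = \<alpha> * sp v0" by (simp add: sp_def)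
  ultimately show "(v0 x - T v0 x) - (v0 y - T v0 y) \<le> sp v1 + (1 + \<alpha>) * sp v0"
    using up lo by (simp add: algebra_simps)
qed

end

lemma VB_one:
  fixes e g s1 s0 a :: real
  assumes a: "0 < a" "a < 1" and g: "0 < g" "g \<le> 1"
    and c: "a * g \<le> (1 - a) * e * g / (s1 + (1 + a) * s0)"
  shows "VI_bound e g s1 s0 a = 1"
proof -
  have ag: "0 < a * g" "a * g < 1" using a g by (auto intro: mult_less_le_imp_less[of a 1 g 1, simplified])
  have L: "ln (a * g) < 0" using ag by simp
  have "ln (a * g) \<le> ln ((1 - a) * e * g / (s1 + (1 + a) * s0))" using ag c by simp
  then have "ln ((1 - a) * e * g / (s1 + (1 + a) * s0)) / ln (a * g) \<le> 1" using L by simp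
  then have "\<lceil>ln ((1 - a) * e * g / (s1 + (1 + a) * s0)) / ln (a * g)\<rceil> \<le> 1"
    by (simp add: ceiling_le_iff)
  then show ?thesis unfolding VI_bound_def by simp
qed

lemma VB_lim0:
  fixes e g s1 s0 :: real
  assumes e: "0 < e" and g: "0 < g" "g \<le> 1" and s: "0 \<le> s1" "0 \<le> s0" "0 < s1 + s0"
  shows "(VI_bound e g s1 s0 \<longlongrightarrow> 1) (at_right 0)"
proof -
  define cm where "cm = e * g / (2 * (s1 + 2 * s0))"
  have cm: "0 < cm" unfolding cm_def using e g s by simp
  have ev: "eventually (\<lambda>x. x \<in> {0<..<min (1/2) cm}) (at_right (0::real))"
    using cm by (intro eventually_at_right_real) simp
  have "eventually (\<lambda>x. VI_bound e g s1 s0 x = 1) (at_right 0)"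
  proof (rule eventually_mono[OF ev])
    fix a :: real assume a: "a \<in> {0<..<min (1/2) cm}"
    show "VI_bound e g s1 s0 a = 1"
    proof (rule VB_one)
      show "0 < a" "a < 1" using a by auto
      show "0 < g" "g \<le> 1" by fact+
      have "a * g \<le> a" using a g by (simp add: mult_left_le)
      also have "\<dots> \<le> cm" using a by simp
      also have "cm \<le> (1 - a) * e * g / (s1 + (1 + a) * s0)"
        unfolding cm_def
      proof -
        have "e * g / (2 * (s1 + 2 * s0)) = (1/2) * e * g / (s1 + 2 * s0)" by simp
        also have "\<dots> \<le> (1 - a) * e * g / (s1 + (1 + a) * s0)"
        proof (rule frac_le)
          show "0 \<le> (1 - a) * e * g" using a e g by simp
          show "1 / 2 * e * g \<le> (1 - a) * e * g" using a e g by (intro mult_right_mono) auto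
          have "0 \<le> a * s0" using a s by simp
          then show "0 < s1 + (1 + a) * s0" using s by (simp add: distrib_right)
          have "a * s0 \<le> 1 * s0" using a s by (intro mult_right_mono) auto
          then show "s1 + (1 + a) * s0 \<le> s1 + 2 * s0" by (simp add: distrib_right)
        qed
        finally show "e * g / (2 * (s1 + 2 * s0)) \<le> (1 - a) * e * g / (s1 + (1 + a) * s0)" .
      qed
      finally show "a * g \<le> (1 - a) * e * g / (s1 + (1 + a) * s0)" .
    qed
  qed
  then show ?thesis by (rule tendsto_eventually)
qed

lemma VB_ge_f: "ln ((1 - a) * e * g / (s1 + (1 + a) * s0)) / ln (a * g) \<le> VI_bound e g s1 s0 a"
proof -
  let ?f = "ln ((1 - a) * e * g / (s1 + (1 + a) * s0)) / ln (a * g)"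
  have "?f \<le> real_of_int \<lceil>?f\<rceil>" by (rule le_of_int_ceiling)
  also have "\<dots> \<le> VI_bound e g s1 s0 a" unfolding VI_bound_def by (rule max.cobounded1)
  finally show ?thesis .
qed


lemma VB_limtop:
  fixes e g s1 s0 :: real
  assumes e: "0 < e" and g: "0 < g" "g \<le> 1" and s: "0 \<le> s1" "0 \<le> s0" "0 < s1 + s0"
  shows "filterlim (VI_bound e g s1 s0) at_top (at_left 1)"
  unfolding filterlim_at_top
proof
  fix Z :: real
  define Z' where "Z' = max Z 1"
  define D where "D = ln 2 - ln g"
  define S where "S = s1 + s0"
  have D: "0 < D" unfolding D_def using g ln_le_zero_iff[of g] by simp
  have Z': "0 < Z'" "Z \<le> Z'" unfolding Z'_def by auto
  define \<delta> where "\<delta> = min (1/2) (S / e * exp (- Z' * D))"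
  have \<delta>: "0 < \<delta>" unfolding \<delta>_def S_def using s e by simp
  have ev: "eventually (\<lambda>x. x \<in> {1 - \<delta><..<1}) (at_left (1::real))"
    using \<delta> by (intro eventually_at_left_real) simp
  show "eventually (\<lambda>x. Z \<le> VI_bound e g s1 s0 x) (at_left 1)"
  proof (rule eventually_mono[OF ev])
    fix a :: real assume a: "a \<in> {1 - \<delta><..<1}"
    have a1: "1/2 < a" "a < 1" "0 < a" using a unfolding \<delta>_def by auto
    define c where "c = (1 - a) * e * g / (s1 + (1 + a) * s0)"
    have den: "S \<le> s1 + (1 + a) * s0" unfolding S_def using a1 s by (simp add: distrib_right)
    have Spos: "0 < S" unfolding S_def using s by simp
    have cpos: "0 < c" unfolding c_def using a1 e g Spos den by simp
    have "c \<le> (1 - a) * e / S"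
      unfolding c_def
    proof (rule frac_le)
      show "0 \<le> (1 - a) * e" using a1 e by simp
      show "(1 - a) * e * g \<le> (1 - a) * e" using a1 e g by (simp add: mult_left_le)
    qed (use Spos den in auto)
    also have "\<dots> < exp (- Z' * D)"
    proof -
      have "1 - a < S / e * exp (- Z' * D)" using a unfolding \<delta>_def by auto
      then show ?thesis using e Spos by (simp add: field_simps)
    qed
    finally have "ln c < - Z' * D" using cpos by (metis ln_exp ln_less_cancel_iff exp_gt_zero)
    have ag: "0 < a * g" "a * g < 1" using a1 g by (auto intro: mult_less_le_imp_less[of a 1 g 1, simplified])
    have L: "ln (a * g) < 0" using ag by simp
    have L2: "- D < ln (a * g)"
    proof -
      have "g / 2 < a * g" using a1 g by simp
      then have "ln (g / 2) < ln (a * g)" using g ag by simp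
      moreover have "ln (g / 2) = ln g - ln 2" by (rule ln_divide_pos) (use g in auto)
      ultimately show ?thesis unfolding D_def by linarith
    qed
    have "ln c \<le> Z' * ln (a * g)"
    proof -
      have "Z' * (- D) \<le> Z' * ln (a * g)" by (rule mult_left_mono) (use L2 Z' in auto)
      then have "- Z' * D \<le> Z' * ln (a * g)" by simp
      then show ?thesis using \<open>ln c < - Z' * D\<close> by linarith
    qed
    then have "Z' \<le> ln c / ln (a * g)" using neg_le_divide_eq[OF L, of Z' "ln c"] by simp
    then show "Z \<le> VI_bound e g s1 s0 a" using VB_ge_f[of a e g s1 s0] Z' unfolding c_def by linarith
  qed
qed

lemma VB_mono:
  fixes e g s1 s0 :: real
  assumes e: "0 < e" and g: "0 < g" "g \<le> 1" and s: "0 \<le> s1" "0 \<le> s0" "0 < s1 + s0"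
  shows "mono_on {0<..<1} (VI_bound e g s1 s0)"
proof (rule mono_onI)
  fix a b :: real assume ab: "a \<in> {0<..<1}" "b \<in> {0<..<1}" "a \<le> b"
  define ca where "ca = (1 - a) * e * g / (s1 + (1 + a) * s0)"
  define cb where "cb = (1 - b) * e * g / (s1 + (1 + b) * s0)"
  define fa where "fa = ln ca / ln (a * g)"
  define fb where "fb = ln cb / ln (b * g)"
  have "0 \<le> a * s0" using ab s by simp
  then have dena: "0 < s1 + (1 + a) * s0" using s by (simp add: distrib_right)
  have "a * s0 \<le> b * s0" using ab s by (simp add: mult_right_mono)
  then have denb: "s1 + (1 + a) * s0 \<le> s1 + (1 + b) * s0" by (simp add: distrib_right)
  have cb: "0 < cb" unfolding cb_def using ab e g dena denb by simp
  have cba: "cb \<le> ca" unfolding ca_def cb_def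
  proof (rule frac_le)
    show "0 \<le> (1 - a) * e * g" using ab e g by simp
    show "(1 - b) * e * g \<le> (1 - a) * e * g" using ab e g by (intro mult_right_mono) auto
  qed (use dena denb in auto)
  have aga: "0 < a * g" "a * g < 1" using ab g by (auto intro: mult_less_le_imp_less[of a 1 g 1, simplified])
  have agb: "0 < b * g" "b * g < 1" using ab g by (auto intro: mult_less_le_imp_less[of b 1 g 1, simplified])
  have "a * g \<le> b * g" using ab g by (simp add: mult_right_mono)
  then have Lab: "ln (a * g) \<le> ln (b * g)" using aga agb by simp
  have Lb: "ln (b * g) < 0" using agb by simp
  have Lc: "ln cb \<le> ln ca" using cb cba by simp
  have VBa: "VI_bound e g s1 s0 a = max (real_of_int \<lceil>fa\<rceil>) 1" unfolding VI_bound_def fa_def ca_def ..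
  have VBb: "VI_bound e g s1 s0 b = max (real_of_int \<lceil>fb\<rceil>) 1" unfolding VI_bound_def fb_def cb_def ..
  show "VI_bound e g s1 s0 a \<le> VI_bound e g s1 s0 b"
  proof (cases "fa \<le> 0")
    case True
    then have "\<lceil>fa\<rceil> \<le> 1" by linarith
    then show ?thesis unfolding VBa VBb by simp
  next
    case False
    have La: "ln (a * g) < 0" using aga by simp
    have "ln ca < 0"
    proof (rule ccontr)
      assume "\<not> ln ca < 0"
      then have "fa \<le> 0" unfolding fa_def using La divide_nonneg_neg[of "ln ca" "ln (a * g)"] by linarith
      then show False using False by simp
    qed
    have "fa \<le> fb"
    proof -
      have "fa = (- ln ca) / (- ln (a * g))" unfolding fa_def by simp
      also have "\<dots> \<le> (- ln cb) / (- ln (b * g))"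
      proof (rule frac_le)
        show "0 \<le> - ln cb" using \<open>ln ca < 0\<close> Lc by linarith
        show "- ln ca \<le> - ln cb" using Lc by linarith
        show "0 < - ln (b * g)" using Lb by linarith
        show "- ln (b * g) \<le> - ln (a * g)" using Lab by linarith
      qed
      also have "\<dots> = fb" unfolding fb_def by simp
      finally show ?thesis .
    qed
    then have "real_of_int \<lceil>fa\<rceil> \<le> real_of_int \<lceil>fb\<rceil>" by (simp add: ceiling_mono)
    then show ?thesis unfolding VBa VBb by (rule max.mono) simp
  qed
qed


theorem theorem2:
  fixes A :: "'s::finite \<Rightarrow> 'a set" and r :: "'s \<Rightarrow> 'a \<Rightarrow> real"
    and p :: "'s \<Rightarrow> 'a \<Rightarrow> 's \<Rightarrow> real" and v0 v1 :: "'s \<Rightarrow> real"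
    and \<alpha> \<epsilon> \<gamma> :: real
  assumes A_fin: "\<And>x. finite (A x)" and A_ne: "\<And>x. A x \<noteq> {}"
    and p_nonneg: "\<And>x a y. a \<in> A x \<Longrightarrow> 0 \<le> p x a y"
    and p_sum: "\<And>x a. a \<in> A x \<Longrightarrow> (\<Sum>y\<in>UNIV. p x a y) = 1"
    and alpha: "0 < \<alpha>" "\<alpha> < 1" and eps: "0 < \<epsilon>"
    and v1_def: "\<And>x. v1 x = Max ((\<lambda>a. r x a) ` A x)"
    and gamma_def: "\<gamma> = coeff A p"
    and gamma: "0 < \<gamma>" "\<gamma> \<le> 1"
    and sp_pos: "sp v1 + sp v0 > 0"
  shows "(\<exists>N. VI_stop A r p \<alpha> \<epsilon> v0 N \<and> (\<forall>n<N. \<not> VI_stop A r p \<alpha> \<epsilon> v0 n)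
            \<and> real N \<le> VI_bound \<epsilon> \<gamma> (sp v1) (sp v0) \<alpha>
            \<and> (\<forall>\<phi>. (\<forall>x. \<phi> x \<in> A x) \<and>
                   Tpol r p \<alpha> \<phi> (VI_iter A r p \<alpha> v0 (N - 1)) = VI_iter A r p \<alpha> v0 N
                   \<longrightarrow> eps_optimal A r p \<alpha> \<epsilon> (det_policy \<phi>)))
     \<and> (\<forall>(e::real) (g::real) (w0::'s \<Rightarrow> real) (w1::'s \<Rightarrow> real).
          0 < e \<and> 0 < g \<and> g \<le> 1 \<and> sp w1 + sp w0 > 0 \<longrightarrow>
            ((VI_bound e g (sp w1) (sp w0) \<longlongrightarrow> 1) (at_right 0))
            \<and> filterlim (VI_bound e g (sp w1) (sp w0)) at_top (at_left 1)
            \<and> mono_on {0<..<1} (VI_bound e g (sp w1) (sp w0)))"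
  proof -
  interpret mdpc A r p \<alpha> using A_fin A_ne p_nonneg p_sum alpha by unfold_locales auto
  have g0: "0 \<le> coeff A p" using gamma gamma_def by simp
  have VIs: "VI_iter A r p \<alpha> v0 n = (T ^^ n) v0" for n unfolding VI_iter_def ..
  define K where "K = sp v1 + (1 + \<alpha>) * sp v0"
  have "0 \<le> \<alpha> * sp v0" using alpha sp_nonneg[of v0] by simp
  then have Kpos: "0 < K" unfolding K_def using sp_pos by (simp add: distrib_right)
  have ag: "0 < \<alpha> * \<gamma>" "\<alpha> * \<gamma> < 1" using alpha gamma
    by (auto intro: mult_less_le_imp_less[of \<alpha> 1 \<gamma> 1, simplified])
  have Dn: "sp (\<lambda>x. VI_iter A r p \<alpha> v0 n x - VI_iter A r p \<alpha> v0 (Suc n) x) \<le> (\<alpha> * \<gamma>) ^ n * K" for n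
  proof -
    have "sp (\<lambda>x. (T ^^ n) v0 x - (T ^^ Suc n) v0 x) \<le> (\<alpha> * \<gamma>) ^ n * sp (\<lambda>x. v0 x - T v0 x)"
      using Delta_bound[OF g0, of n v0] gamma_def by simp
    also have "\<dots> \<le> (\<alpha> * \<gamma>) ^ n * K"
      unfolding K_def using Delta0[OF v1_def, of v0] ag by (intro mult_left_mono) auto
    finally show ?thesis unfolding VIs .
  qed
  define c where "c = (1 - \<alpha>) * \<epsilon> * \<gamma> / K"
  have cpos: "0 < c" unfolding c_def using alpha eps gamma Kpos by simp
  define f where "f = ln c / ln (\<alpha> * \<gamma>)"
  define n0 where "n0 = max 1 (nat \<lceil>f\<rceil>)"
  have VB: "VI_bound \<epsilon> \<gamma> (sp v1) (sp v0) \<alpha> = real n0"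
  proof -
    have "VI_bound \<epsilon> \<gamma> (sp v1) (sp v0) \<alpha> = max (real_of_int \<lceil>f\<rceil>) 1"
      unfolding VI_bound_def f_def c_def K_def ..
    also have "\<dots> = real n0" unfolding n0_def by (cases "\<lceil>f\<rceil> \<le> 1") auto
    finally show ?thesis .
  qed
  have VBm: "max (real_of_int \<lceil>f\<rceil>) 1 = real n0" unfolding n0_def by (cases "\<lceil>f\<rceil> \<le> 1") auto
  have "f \<le> real_of_int \<lceil>f\<rceil>" by (rule le_of_int_ceiling)
  then have n0f: "f \<le> real n0" using VBm by linarith
  have n0_1: "1 \<le> n0" unfolding n0_def by simp
  have L: "ln (\<alpha> * \<gamma>) < 0" using ag by simp
  have powc: "(\<alpha> * \<gamma>) ^ n0 \<le> c"
  proof -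
    have "real n0 * ln (\<alpha> * \<gamma>) \<le> f * ln (\<alpha> * \<gamma>)" using n0f L by (intro mult_right_mono_neg) auto
    also have "\<dots> = ln c" unfolding f_def using L by simp
    finally have "ln ((\<alpha> * \<gamma>) ^ n0) \<le> ln c" using ag by (simp add: ln_realpow)
    then show ?thesis using ag cpos by simp
  qed
  have stop0: "VI_stop A r p \<alpha> \<epsilon> v0 n0"
  proof -
    obtain k where k: "n0 = Suc k" using n0_1 by (cases n0) auto
    have "(\<alpha> * \<gamma>) ^ k * (\<alpha> * \<gamma>) \<le> (1 - \<alpha>) * \<epsilon> * \<gamma> / K" using powc k c_def by (simp add: mult.commute)
    then have "(\<alpha> * \<gamma>) ^ k * (\<alpha> * \<gamma>) * K \<le> (1 - \<alpha>) * \<epsilon> * \<gamma>" using Kpos by (simp add: le_divide_eq)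
    moreover have eqr: "((1 - \<alpha>) / \<alpha> * \<epsilon>) * (\<alpha> * \<gamma>) = (1 - \<alpha>) * \<epsilon> * \<gamma>"
      using alpha by (simp add: field_simps)
    moreover have "((\<alpha> * \<gamma>) ^ k * K) * (\<alpha> * \<gamma>) = (\<alpha> * \<gamma>) ^ k * (\<alpha> * \<gamma>) * K" by (simp only: mult_ac)
    ultimately have "((\<alpha> * \<gamma>) ^ k * K) * (\<alpha> * \<gamma>) \<le> ((1 - \<alpha>) / \<alpha> * \<epsilon>) * (\<alpha> * \<gamma>)"
      by linarith
    then have "(\<alpha> * \<gamma>) ^ k * K \<le> (1 - \<alpha>) / \<alpha> * \<epsilon>" by (rule mult_right_le_imp_le) (use ag in auto)
    then show ?thesis unfolding VI_stop_def using Dn[of k] k by simp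
  qed
  define N where "N = (LEAST n. VI_stop A r p \<alpha> \<epsilon> v0 n)"
  have stopN: "VI_stop A r p \<alpha> \<epsilon> v0 N" unfolding N_def by (rule LeastI[where P="VI_stop A r p \<alpha> \<epsilon> v0", OF stop0])
  have minN: "\<forall>n<N. \<not> VI_stop A r p \<alpha> \<epsilon> v0 n" unfolding N_def using not_less_Least by blast
  have NleN0: "N \<le> n0" unfolding N_def by (rule Least_le[where P="VI_stop A r p \<alpha> \<epsilon> v0", OF stop0])
  have N1: "1 \<le> N" using stopN unfolding VI_stop_def by simp
  have part1: "\<forall>\<phi>. (\<forall>x. \<phi> x \<in> A x) \<and>
                   Tpol r p \<alpha> \<phi> (VI_iter A r p \<alpha> v0 (N - 1)) = VI_iter A r p \<alpha> v0 N
                   \<longrightarrow> eps_optimal A r p \<alpha> \<epsilon> (det_policy \<phi>)"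
  proof (intro allI impI, elim conjE)
    fix \<phi> assume phi: "\<forall>x. \<phi> x \<in> A x"
      and eq: "Tpol r p \<alpha> \<phi> (VI_iter A r p \<alpha> v0 (N - 1)) = VI_iter A r p \<alpha> v0 N"
    have vT: "VI_iter A r p \<alpha> v0 N = T (VI_iter A r p \<alpha> v0 (N - 1))"
      using N1 unfolding VIs by (cases N) auto
    show "eps_optimal A r p \<alpha> \<epsilon> (det_policy \<phi>)"
      by (rule greedy_opt[OF phi vT eq]) (use stopN in \<open>simp add: VI_stop_def\<close>)
  qed
  have part2: "\<forall>(e::real) (g::real) (w0::'s \<Rightarrow> real) (w1::'s \<Rightarrow> real).
          0 < e \<and> 0 < g \<and> g \<le> 1 \<and> sp w1 + sp w0 > 0 \<longrightarrow>
            ((VI_bound e g (sp w1) (sp w0) \<longlongrightarrow> 1) (at_right 0))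
            \<and> filterlim (VI_bound e g (sp w1) (sp w0)) at_top (at_left 1)
            \<and> mono_on {0<..<1} (VI_bound e g (sp w1) (sp w0))"
  proof (intro allI impI, elim conjE)
    fix e g :: real and w0 w1 :: "'s \<Rightarrow> real"
    assume h: "0 < e" "0 < g" "g \<le> 1" "sp w1 + sp w0 > 0"
    have s: "0 \<le> sp w1" "0 \<le> sp w0" by (rule sp_nonneg)+
    show "((VI_bound e g (sp w1) (sp w0) \<longlongrightarrow> 1) (at_right 0))
            \<and> filterlim (VI_bound e g (sp w1) (sp w0)) at_top (at_left 1)
            \<and> mono_on {0<..<1} (VI_bound e g (sp w1) (sp w0))"
      using VB_lim0[OF h(1-3) s h(4)] VB_limtop[OF h(1-3) s h(4)] VB_mono[OF h(1-3) s h(4)] by blast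
  qed
  have "real N \<le> VI_bound \<epsilon> \<gamma> (sp v1) (sp v0) \<alpha>" unfolding VB using NleN0 by simp
  with stopN minN part1 part2 show ?thesis by blast
qed

end
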